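(* Let $\mathfrak L$ be a complete lattice and $\lambda\in\mathcal O$ a nonzero limit ordinal. (1) If $h:\mathcal O\times\mathcal O\to\mathfrak L$ is antitone in its first argument (i.e. $\alpha\le\alpha'$ implies $h(\alpha',\beta)\sqsubseteq h(\alpha,\beta)$ for all $\beta$), then $\limsup_{\beta\to\lambda}h(\beta,\beta)\sqsubseteq\limsup_{\alpha\to\lambda}\limsup_{\beta\to\lambda}h(\alpha,\beta)$. (2) If $h:\mathcal O\times\mathcal O\to\mathfrak L$ is monotone in its first argument, then $\liminf_{\alpha\to\lambda}\liminf_{\beta\to\lambda}h(\alpha,\beta)\sqsubseteq\liminf_{\beta\to\lambda}h(\beta,\beta)$.
   Context: $\mathcal O$ is the set of ordinals $\le\top_{\mathsf{ord}}$ for a fixed ordinal $\top_{\mathsf{ord}}$ ($=\beth_\omega$). For $f:\mathcal O\to\mathfrak L$ and a nonzero limit $\lambda$: $\liminf_{\alpha\to\lambda}f(\alpha)=\sup_{\alpha_0<\lambda}\inf_{\alpha_0\le\alpha<\lambda}f(\alpha)$, $\limsup_{\alpha\to\lambda}f(\alpha)=\inf_{\alpha_0<\lambda}\sup_{\alpha_0\le\alpha<\lambda}f(\alpha)$. *)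

theory Defs
  imports Main
begin

text \<open>Ordinals are modelled by an arbitrary well-ordered type 'o (class wellorder).
  Limits along a nonzero limit ordinal lam, as in the paper.\<close>

definition is_nonzero_limit :: "'o::wellorder \<Rightarrow> bool" where
  "is_nonzero_limit lam \<longleftrightarrow> (\<exists>a. a < lam) \<and> (\<forall>a<lam. \<exists>b. a < b \<and> b < lam)"

definition ord_liminf :: "'o::wellorder \<Rightarrow> ('o \<Rightarrow> 'l::complete_lattice) \<Rightarrow> 'l" where
  "ord_liminf lam f = (SUP a0\<in>{..<lam}. INF a\<in>{a0..<lam}. f a)"

definition ord_limsup :: "'o::wellorder \<Rightarrow> ('o \<Rightarrow> 'l::complete_lattice) \<Rightarrow> 'l" where
  "ord_limsup lam f = (INF a0\<in>{..<lam}. SUP a\<in>{a0..<lam}. f a)"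

end

theory Submission
  imports Defs
begin

lemma part1:
  fixes lam :: "'o::wellorder" and h :: "'o \<Rightarrow> 'o \<Rightarrow> 'l::complete_lattice"
  assumes anti: "\<forall>a a' b. a \<le> a' \<longrightarrow> h a' b \<le> h a b"
  shows "ord_limsup lam (\<lambda>b. h b b) \<le> ord_limsup lam (\<lambda>a. ord_limsup lam (\<lambda>b. h a b))"
  unfolding ord_limsup_def
proof (rule INF_greatest)
  fix a0 assume a0: "a0 \<in> {..<lam}"
  have "(INF a0\<in>{..<lam}. SUP a\<in>{a0..<lam}. h a a) \<le> (INF a1\<in>{..<lam}. SUP b\<in>{a1..<lam}. h a0 b)"
  proof (rule INF_greatest)
    fix a1 assume a1: "a1 \<in> {..<lam}"
    define c where "c = max a0 a1"
    have c: "c \<in> {..<lam}" using a0 a1 by (auto simp: c_def max_def)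
    have "(INF a0\<in>{..<lam}. SUP a\<in>{a0..<lam}. h a a) \<le> (SUP a\<in>{c..<lam}. h a a)"
      by (rule INF_lower[OF c])
    also have "\<dots> \<le> (SUP b\<in>{a1..<lam}. h a0 b)"
    proof (rule SUP_least)
      fix b assume b: "b \<in> {c..<lam}"
      have "h b b \<le> h a0 b" using anti b by (auto simp: c_def)
      also have "\<dots> \<le> (SUP b\<in>{a1..<lam}. h a0 b)" using b by (intro SUP_upper) (auto simp: c_def)
      finally show "h b b \<le> (SUP b\<in>{a1..<lam}. h a0 b)" .
    qed
    finally show "(INF a0\<in>{..<lam}. SUP a\<in>{a0..<lam}. h a a) \<le> (SUP b\<in>{a1..<lam}. h a0 b)" .
  qed
  also have "\<dots> \<le> (SUP a\<in>{a0..<lam}. INF a1\<in>{..<lam}. SUP b\<in>{a1..<lam}. h a b)"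
    using a0 by (intro SUP_upper[where i=a0]) auto
  finally show "(INF a0\<in>{..<lam}. SUP a\<in>{a0..<lam}. h a a) \<le> (SUP a\<in>{a0..<lam}. INF a1\<in>{..<lam}. SUP b\<in>{a1..<lam}. h a b)" .
qed

lemma part2:
  fixes lam :: "'o::wellorder" and h :: "'o \<Rightarrow> 'o \<Rightarrow> 'l::complete_lattice"
  assumes mono: "\<forall>a a' b. a \<le> a' \<longrightarrow> h a b \<le> h a' b"
  shows "ord_liminf lam (\<lambda>a. ord_liminf lam (\<lambda>b. h a b)) \<le> ord_liminf lam (\<lambda>b. h b b)"
  unfolding ord_liminf_def
proof (rule SUP_least)
  fix a0 assume a0: "a0 \<in> {..<lam}"
  have "(INF a\<in>{a0..<lam}. SUP a1\<in>{..<lam}. INF b\<in>{a1..<lam}. h a b) \<le> (SUP a1\<in>{..<lam}. INF b\<in>{a1..<lam}. h a0 b)"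
    using a0 by (intro INF_lower[where i=a0]) auto
  also have "\<dots> \<le> (SUP a0\<in>{..<lam}. INF a\<in>{a0..<lam}. h a a)"
  proof (rule SUP_least)
    fix a1 assume a1: "a1 \<in> {..<lam}"
    define c where "c = max a0 a1"
    have c: "c \<in> {..<lam}" using a0 a1 by (auto simp: c_def max_def)
    have "(INF b\<in>{a1..<lam}. h a0 b) \<le> (INF a\<in>{c..<lam}. h a a)"
    proof (rule INF_greatest)
      fix b assume b: "b \<in> {c..<lam}"
      have "(INF b\<in>{a1..<lam}. h a0 b) \<le> h a0 b" using b by (intro INF_lower) (auto simp: c_def)
      also have "\<dots> \<le> h b b" using mono b by (auto simp: c_def)
      finally show "(INF b\<in>{a1..<lam}. h a0 b) \<le> h b b" .
    qed
    also have "\<dots> \<le> (SUP a0\<in>{..<lam}. INF a\<in>{a0..<lam}. h a a)"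
      by (rule SUP_upper[OF c])
    finally show "(INF b\<in>{a1..<lam}. h a0 b) \<le> (SUP a0\<in>{..<lam}. INF a\<in>{a0..<lam}. h a a)" .
  qed
  finally show "(INF a\<in>{a0..<lam}. SUP a1\<in>{..<lam}. INF b\<in>{a1..<lam}. h a b) \<le> (SUP a0\<in>{..<lam}. INF a\<in>{a0..<lam}. h a a)" .
qed

theorem lemma4p12:
  fixes lam :: "'o::wellorder" and h :: "'o \<Rightarrow> 'o \<Rightarrow> 'l::complete_lattice"
  assumes "is_nonzero_limit lam"
  shows "((\<forall>a a' b. a \<le> a' \<longrightarrow> h a' b \<le> h a b) \<longrightarrow>
           ord_limsup lam (\<lambda>b. h b b) \<le> ord_limsup lam (\<lambda>a. ord_limsup lam (\<lambda>b. h a b)))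
       \<and> ((\<forall>a a' b. a \<le> a' \<longrightarrow> h a b \<le> h a' b) \<longrightarrow>
           ord_liminf lam (\<lambda>a. ord_liminf lam (\<lambda>b. h a b)) \<le> ord_liminf lam (\<lambda>b. h b b))"
  using part1[of h lam] part2[of h lam] by blast

end
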